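(* Let $\omega\in\Omega^*$ and let $\mathcal{U}$ be an ultrafilter on $\mathbb{R}_+$ containing no bounded set. Then $W^*\varphi^{\mathcal{U}}_\omega=\psi^{\mathcal{U}}_\omega$, i.e. for every $f\in L^{\infty}(\mathbb{R}_+^{\times})$, $\mathcal{U}\text{-}\lim_x\frac1x\int_0^x(Wf)_\omega(t)\,dt=e^{\mathcal{U}}\text{-}\lim_x\frac{1}{\log x}\int_1^xf^{\times}_\omega(t)\frac{dt}{t}$.
   Context: $L^{\infty}(\mathbb{R}_+)$, $L^{\infty}(\mathbb{R}_+^{\times})$: real-valued essentially bounded measurable functions on $[0,\infty)$ and $[1,\infty)$. $W:L^{\infty}(\mathbb{R}_+^{\times})\to L^{\infty}(\mathbb{R}_+)$, $(Wf)(x)=f(e^x)$, $(W^*\varphi)(f)=\varphi(Wf)$. Let $\beta\mathbb{N}_0$ be the Stone–Čech compactification of $\mathbb{N}_0$ (points = ultrafilters), $\tau$ the extension of $n\mapsto n+1$, $\Omega=(\beta\mathbb{N}_0\times[0,1])/\sim$ with $(\tau\eta,0)\sim(\eta,1)$, containing $\mathbb{R}_+$ via $(n,t)\mapsto n+t$, $\Omega^*=\Omega\setminus\mathbb{R}_+$ with flow $\tau^s(\eta,t)=(\tau^{[t+s]}\eta,t+s-[t+s])$. Each $\omega=(\eta,t)$ is identified with the ultrafilter $\{A+t:A\in\eta\}$ on $\mathbb{R}_+$; for an ultrafilter $\mathcal{V}$ on $\mathbb{R}_+$, $e^{\mathcal{V}}=\{e^A:A\in\mathcal{V}\}$ is an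 ultrafilter on $[1,\infty)$. For $g\in L^{\infty}(\mathbb{R}_+)$, $g_\omega=\omega\text{-}\lim_sg(\cdot+s)$ (weak* limit in $L^{\infty}(\mathbb{R}_+)=L^1(\mathbb{R}_+)^*$ along $\omega$), extended to $\mathbb{R}$ by $g_\omega(x)=g_{\tau^{-N}\omega}(N+x)$ for $x\in[-N,0]$. For $f\in L^{\infty}(\mathbb{R}_+^{\times})$, $f^{\times}_\omega=e^\omega\text{-}\lim_rf(r\,\cdot)$ (weak* limit in $L^{\infty}(\mathbb{R}_+^{\times})$ along $e^\omega$, $r\ge1$). Here $\varphi^{\mathcal{U}}_\omega(g)=\mathcal{U}\text{-}\lim_x\frac1x\int_0^xg_\omega(t)\,dt$ on $L^{\infty}(\mathbb{R}_+)$ and $\psi^{\mathcal{U}}_\omega(f)=e^{\mathcal{U}}\text{-}\lim_x\frac{1}{\log x}\int_1^xf^{\times}_\omega(t)\frac{dt}{t}$ on $L^{\infty}(\mathbb{R}_+^{\times})$. *)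

theory Defs
  imports "HOL-Analysis.Analysis"
begin

definition is_ultrafilter :: "'a filter \<Rightarrow> bool" where
  "is_ultrafilter F \<longleftrightarrow> F \<noteq> bot \<and> (\<forall>P. eventually P F \<or> eventually (\<lambda>x. \<not> P x) F)"

text \<open>Free (non-principal) ultrafilter on the natural numbers: a point of the remainder of beta N_0.\<close>
definition free_ultrafilter_nat :: "nat filter \<Rightarrow> bool" where
  "free_ultrafilter_nat \<eta> \<longleftrightarrow> is_ultrafilter \<eta> \<and> (\<forall>n. \<not> eventually (\<lambda>m. m = n) \<eta>)"

text \<open>The point omega = (eta, t) of Omega, viewed as the ultrafilter {A + t : A in eta} on R_+.\<close>
definition omega_filter :: "nat filter \<Rightarrow> real \<Rightarrow> real filter" where
  "omega_filter \<eta> t = filtermap (\<lambda>n. real n + t) \<eta>"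

text \<open>Measure spaces underlying L^infty(R_+) (Lebesgue measure on [0,inf)) and
  L^infty(R_+^x) (Haar measure dt/t on [1,inf)).\<close>
definition M_add :: "real measure" where
  "M_add = restrict_space lebesgue {0..}"

definition M_mult :: "real measure" where
  "M_mult = density (restrict_space lebesgue {1..}) (\<lambda>t. ennreal (1 / t))"

definition Linf :: "real measure \<Rightarrow> (real \<Rightarrow> real) \<Rightarrow> bool" where
  "Linf M g \<longleftrightarrow> g \<in> borel_measurable M \<and> (\<exists>C. AE x in M. \<bar>g x\<bar> \<le> C)"

text \<open>L is a weak* limit (in L^infty(M) = L^1(M)^*) of the family G along the filter F.\<close>
definition wstar_lim :: "real measure \<Rightarrow> 'i filter \<Rightarrow> ('i \<Rightarrow> real \<Rightarrow> real) \<Rightarrow> (real \<Rightarrow> real) \<Rightarrow> bool" where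
  "wstar_lim M F G L \<longleftrightarrow> Linf M L \<and>
     (\<forall>h. integrable M h \<longrightarrow>
        ((\<lambda>i. \<integral>x. G i x * h x \<partial>M) \<longlongrightarrow> (\<integral>x. L x * h x \<partial>M)) F)"

definition W :: "(real \<Rightarrow> real) \<Rightarrow> real \<Rightarrow> real" where
  "W f x = f (exp x)"

definition add_lim :: "real filter \<Rightarrow> (real \<Rightarrow> real) \<Rightarrow> real \<Rightarrow> real" where
  "add_lim \<omega> g = (SOME L. wstar_lim M_add \<omega> (\<lambda>s x. g (x + s)) L)"

definition mult_lim :: "real filter \<Rightarrow> (real \<Rightarrow> real) \<Rightarrow> real \<Rightarrow> real" where
  "mult_lim \<omega> f = (SOME L. wstar_lim M_mult (filtermap exp \<omega>) (\<lambda>r y. f (r * y)) L)"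

definition phi :: "real filter \<Rightarrow> real filter \<Rightarrow> (real \<Rightarrow> real) \<Rightarrow> real" where
  "phi U \<omega> g = Lim U (\<lambda>x. (1 / x) * (LINT t:{0..x}|lebesgue. add_lim \<omega> g t))"

definition psi :: "real filter \<Rightarrow> real filter \<Rightarrow> (real \<Rightarrow> real) \<Rightarrow> real" where
  "psi U \<omega> f = Lim (filtermap exp U) (\<lambda>x. (1 / ln x) * (LINT t:{1..x}|lebesgue. mult_lim \<omega> f t / t))"

end

theory Submission
  imports Defs "HOL-Probability.Probability"
begin

lemma sets_M_add: "sets M_add = sets (restrict_space lebesgue {0..})"
  by (simp add: M_add_def)
lemma space_M_add[simp]: "space M_add = {0..}"
  by (simp add: M_add_def space_restrict_space)

lemma borel_M_add: "(f :: real \<Rightarrow> real) \<in> borel_measurable borel \<Longrightarrow> f \<in> borel_measurable M_add"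
  unfolding M_add_def
  by (intro measurable_restrict_space1) (simp add: measurable_completion measurable_lborel1)

lemma integrable_w: "integrable M_add (\<lambda>x. exp (- x))"
proof -
  have "(\<integral>\<^sup>+x. ennreal (x^0 * exp (-x)) * indicator {0 ..} x \<partial>lborel) = 1"
    using nn_intergal_power_times_exp_Ici[of 0] by simp
  then have "integrable lborel (\<lambda>x::real. indicator {0..} x *\<^sub>R exp (- x))"
    by (intro integrableI_nonneg) (auto simp: mult.commute ennreal_indicator ennreal_mult' split: split_indicator intro!: AE_I2)
  then show ?thesis
    unfolding M_add_def
    by (subst integrable_restrict_space) (auto simp: integrable_completion)
qed

lemma sigma_finite_M_add: "sigma_finite_measure M_add"
proof -
  have "sigma_finite_measure (lebesgue :: real measure)"
  proof
    show "\<exists>A. countable A \<and> A \<subseteq> sets (lebesgue::real measure) \<and> \<Union> A = space lebesgue \<and> (\<forall>a\<in>A. emeasure lebesgue a \<noteq> \<infinity>)"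
    proof (intro exI[of _ "range (\<lambda>n::nat. {-real n..real n})"] conjI)
      show "\<Union> (range (\<lambda>n::nat. {-real n..real n})) = space lebesgue"
      proof safe
        fix x :: real
        obtain n :: nat where "\<bar>x\<bar> \<le> real n" using real_arch_simple by blast
        then show "x \<in> \<Union> (range (\<lambda>n::nat. {-real n..real n}))" by (auto intro!: exI[of _ n])
      qed auto
    qed auto
  qed
  then show ?thesis unfolding M_add_def
    by (intro sigma_finite_measure_restrict_space) auto
qed

lemma ultra_conv:
  fixes u :: "'i \<Rightarrow> real"
  assumes "F \<noteq> bot" "\<forall>P. eventually P F \<or> eventually (\<lambda>x. \<not> P x) F"
    and "eventually (\<lambda>i. \<bar>u i\<bar> \<le> B) F"
  shows "(u \<longlongrightarrow> Lim F u) F"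
proof -
  have "compact {-B..B}" by simp
  moreover have "filtermap u F \<noteq> bot" using assms(1) by (simp add: filtermap_bot_iff)
  moreover have "eventually (\<lambda>x. x \<in> {-B..B}) (filtermap u F)"
    using assms(3) by (simp add: eventually_filtermap abs_le_iff) (auto elim: eventually_mono)
  ultimately obtain l where l: "inf (nhds l) (filtermap u F) \<noteq> bot"
    unfolding compact_filter by blast
  have "(u \<longlongrightarrow> l) F"
  proof (rule topological_tendstoI)
    fix S assume S: "open S" "l \<in> S"
    show "eventually (\<lambda>i. u i \<in> S) F"
    proof (rule ccontr)
      assume "\<not> ?thesis"
      then have "eventually (\<lambda>i. u i \<notin> S) F" using assms(2) by blast
      then have "eventually (\<lambda>x. x \<notin> S) (filtermap u F)" by (simp add: eventually_filtermap)
      moreover have "eventually (\<lambda>x. x \<in> S) (nhds l)" using S by (rule eventually_nhds_in_open)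
      ultimately have "eventually (\<lambda>x. False) (inf (nhds l) (filtermap u F))"
        unfolding eventually_inf by (intro exI[of _ "\<lambda>x. x \<in> S"] exI[of _ "\<lambda>x. x \<notin> S"]) auto
      with l show False by (simp add: eventually_False)
    qed
  qed
  then show ?thesis using assms(1) by (simp add: tendsto_Lim)
qed



lemma ident_M_add[measurable]: "(\<lambda>x::real. x) \<in> borel_measurable M_add"
  by (rule borel_M_add) simp

locale wsctx =
  fixes F :: "'i filter" and G :: "'i \<Rightarrow> real \<Rightarrow> real" and C :: real
  assumes F_nbot: "F \<noteq> bot" and F_ultra: "\<forall>P. eventually P F \<or> eventually (\<lambda>x. \<not> P x) F"
    and C_nn: "0 \<le> C"
    and G_ev: "eventually (\<lambda>i. G i \<in> borel_measurable M_add \<and> (AE x in M_add. \<bar>G i x\<bar> \<le> C)) F"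

context wsctx
begin

definition Lam :: "(real \<Rightarrow> real) \<Rightarrow> real" where
  "Lam h = Lim F (\<lambda>i. \<integral>x. G i x * h x \<partial>M_add)"

lemma int_GH:
  assumes g: "g \<in> borel_measurable M_add" "AE x in M_add. \<bar>g x\<bar> \<le> C" and h: "integrable M_add h"
  shows "integrable M_add (\<lambda>x. g x * h x)" "\<bar>\<integral>x. g x * h x \<partial>M_add\<bar> \<le> C * (\<integral>x. \<bar>h x\<bar> \<partial>M_add)"
proof -
  have hm: "h \<in> borel_measurable M_add" using h by auto
  show int: "integrable M_add (\<lambda>x. g x * h x)"
    by (rule Bochner_Integration.integrable_bound[where f="\<lambda>x. C * h x"])
       (use g h hm in \<open>auto elim!: eventually_mono simp: abs_mult C_nn intro!: mult_right_mono\<close>)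
  have "\<bar>\<integral>x. g x * h x \<partial>M_add\<bar> \<le> (\<integral>x. \<bar>g x * h x\<bar> \<partial>M_add)"
    by (rule integral_abs_bound)
  also have "\<dots> \<le> (\<integral>x. C * \<bar>h x\<bar> \<partial>M_add)"
    by (rule integral_mono_AE) (use integrable_abs[OF int] h g in \<open>auto elim!: eventually_mono simp: abs_mult intro!: mult_right_mono\<close>)
  also have "\<dots> = C * (\<integral>x. \<bar>h x\<bar> \<partial>M_add)" by simp
  finally show "\<bar>\<integral>x. g x * h x \<partial>M_add\<bar> \<le> C * (\<integral>x. \<bar>h x\<bar> \<partial>M_add)" .
qed

lemma Lam_tendsto:
  assumes h: "integrable M_add h"
  shows "((\<lambda>i. \<integral>x. G i x * h x \<partial>M_add) \<longlongrightarrow> Lam h) F"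
    and "\<bar>Lam h\<bar> \<le> C * (\<integral>x. \<bar>h x\<bar> \<partial>M_add)"
proof -
  have ev: "eventually (\<lambda>i. \<bar>\<integral>x. G i x * h x \<partial>M_add\<bar> \<le> C * (\<integral>x. \<bar>h x\<bar> \<partial>M_add)) F"
    using G_ev by eventually_elim (use int_GH h in auto)
  show t: "((\<lambda>i. \<integral>x. G i x * h x \<partial>M_add) \<longlongrightarrow> Lam h) F"
    unfolding Lam_def by (rule ultra_conv[OF F_nbot F_ultra ev])
  show "\<bar>Lam h\<bar> \<le> C * (\<integral>x. \<bar>h x\<bar> \<partial>M_add)"
    by (rule tendsto_upperbound[OF tendsto_rabs[OF t] ev F_nbot])
qed

lemma Lam_lin:
  assumes h1: "integrable M_add h1" and h2: "integrable M_add h2"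
  shows "Lam (\<lambda>x. a * h1 x + b * h2 x) = a * Lam h1 + b * Lam h2"
proof -
  have "eventually (\<lambda>i. a * (\<integral>x. G i x * h1 x \<partial>M_add) + b * (\<integral>x. G i x * h2 x \<partial>M_add)
      = (\<integral>x. G i x * (a * h1 x + b * h2 x) \<partial>M_add)) F"
    using G_ev
  proof eventually_elim
    case (elim i)
    then have "integrable M_add (\<lambda>x. G i x * h1 x)" "integrable M_add (\<lambda>x. G i x * h2 x)"
      using int_GH h1 h2 by auto
    then show ?case by (simp add: algebra_simps)
  qed
  moreover have "((\<lambda>i. a * (\<integral>x. G i x * h1 x \<partial>M_add) + b * (\<integral>x. G i x * h2 x \<partial>M_add))
     \<longlongrightarrow> a * Lam h1 + b * Lam h2) F"
    by (intro tendsto_intros Lam_tendsto h1 h2)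
  ultimately have "((\<lambda>i. \<integral>x. G i x * (a * h1 x + b * h2 x) \<partial>M_add) \<longlongrightarrow> a * Lam h1 + b * Lam h2) F"
    using tendsto_cong by force
  then show ?thesis unfolding Lam_def by (intro tendsto_Lim) (use F_nbot in auto)
qed

lemma Lam_add:
  assumes "integrable M_add h1" "integrable M_add h2"
  shows "Lam (\<lambda>x. h1 x + h2 x) = Lam h1 + Lam h2"
  using Lam_lin[OF assms, of 1 1] by simp

lemma Lam_cmult:
  assumes "integrable M_add h"
  shows "Lam (\<lambda>x. c * h x) = c * Lam h"
  using Lam_lin[OF assms assms, of c 0] by simp

lemma Lam_diff:
  assumes "integrable M_add h1" "integrable M_add h2"
  shows "Lam (\<lambda>x. h1 x - h2 x) = Lam h1 - Lam h2"
  using Lam_lin[OF assms, of 1 "-1"] by simp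

lemma Lam_cong_AE:
  assumes h1: "integrable M_add h1" and h2: "integrable M_add h2" and ae: "AE x in M_add. h1 x = h2 x"
  shows "Lam h1 = Lam h2"
proof -
  have "eventually (\<lambda>i. (\<integral>x. G i x * h1 x \<partial>M_add) = (\<integral>x. G i x * h2 x \<partial>M_add)) F"
    using G_ev
  proof eventually_elim
    case (elim i)
    then show ?case using h1 h2 ae by (intro integral_cong_AE) (auto elim!: eventually_mono)
  qed
  then have eq: "\<And>l. ((\<lambda>i. \<integral>x. G i x * h1 x \<partial>M_add) \<longlongrightarrow> l) F \<longleftrightarrow> ((\<lambda>i. \<integral>x. G i x * h2 x \<partial>M_add) \<longlongrightarrow> l) F"
    by (rule tendsto_cong)
  then show ?thesis unfolding Lam_def Topological_Spaces.Lim_def by (simp only: eq)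
qed

lemma Lam_sum:
  assumes "finite I" "\<And>k. k \<in> I \<Longrightarrow> integrable M_add (h k)"
  shows "Lam (\<lambda>x. \<Sum>k\<in>I. h k x) = (\<Sum>k\<in>I. Lam (h k))"
  using assms
proof (induction I rule: finite_induct)
  case empty
  have "Lam (\<lambda>x. 0) = Lam (\<lambda>x. 0 * 0)" by simp
  also have "\<dots> = 0 * Lam (\<lambda>x. 0)" by (rule Lam_cmult) simp
  finally show ?case by simp
next
  case (insert k I)
  then show ?case by (simp add: Lam_add)
qed

lemma Lam_L1:
  assumes h: "integrable M_add h" and s: "\<And>n. integrable M_add (s n)"
    and lim: "(\<lambda>n. \<integral>x. \<bar>s n x - h x\<bar> \<partial>M_add) \<longlonglongrightarrow> 0"
  shows "(\<lambda>n. Lam (s n)) \<longlonglongrightarrow> Lam h"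
proof -
  have bnd: "\<bar>Lam (s n) - Lam h\<bar> \<le> C * (\<integral>x. \<bar>s n x - h x\<bar> \<partial>M_add)" for n
    using Lam_tendsto(2)[of "\<lambda>x. s n x - h x"] Lam_diff[OF s h] s h by auto
  have lim2: "(\<lambda>n. C * (\<integral>x. \<bar>s n x - h x\<bar> \<partial>M_add)) \<longlonglongrightarrow> 0"
    using tendsto_mult_right_zero[OF lim] by simp
  have "(\<lambda>n. Lam (s n) - Lam h) \<longlonglongrightarrow> 0"
    by (rule Lim_null_comparison[OF always_eventually lim2]) (simp add: bnd)
  then show ?thesis by (simp add: LIM_zero_iff)
qed

end


lemma L1_dom:
  fixes s :: "nat \<Rightarrow> 'a \<Rightarrow> real"
  assumes "f \<in> borel_measurable M" "\<And>i. s i \<in> borel_measurable M" "integrable M w"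
    and "AE x in M. (\<lambda>i. s i x) \<longlonglongrightarrow> f x"
    and "\<And>i. AE x in M. \<bar>s i x\<bar> \<le> w x"
    and "AE x in M. \<bar>f x\<bar> \<le> w x"
  shows "(\<lambda>n. \<integral>x. \<bar>s n x - f x\<bar> \<partial>M) \<longlonglongrightarrow> 0"
proof -
  have "(\<lambda>n. \<integral>x. \<bar>s n x - f x\<bar> \<partial>M) \<longlonglongrightarrow> (\<integral>x. 0 \<partial>M)"
  proof (rule integral_dominated_convergence[where w="\<lambda>x. 2 * w x"])
    show "AE x in M. (\<lambda>i. \<bar>s i x - f x\<bar>) \<longlonglongrightarrow> 0"
      using assms(4) by eventually_elim (auto intro: tendsto_rabs_zero simp: LIM_zero_iff)
    show "AE x in M. norm \<bar>s i x - f x\<bar> \<le> 2 * w x" for i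
      using assms(5)[of i] assms(6) by eventually_elim auto
  qed (use assms in auto)
  then show ?thesis by simp
qed

context wsctx
begin

lemma Lam_zero: "Lam (\<lambda>x. 0) = 0"
  using Lam_cmult[of "\<lambda>x. 0" 0] by simp

definition w :: "real \<Rightarrow> real" where "w x = exp (- x)"

lemma w_pos: "0 < w x" by (simp add: w_def)
lemma w_meas[measurable]: "w \<in> borel_measurable M_add" unfolding w_def by measurable
lemma w_int: "integrable M_add w" unfolding w_def by (rule integrable_w)

lemma wA_int: "A \<in> sets M_add \<Longrightarrow> integrable M_add (\<lambda>x. w x * indicator A x)"
  by (intro integrable_real_mult_indicator w_int)

definition v :: "real set \<Rightarrow> real" where
  "v A = Lam (\<lambda>x. w x * indicator A x) + C * (\<integral>x. w x * indicator A x \<partial>M_add)"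

lemma int_wA_abs: "(\<integral>x. \<bar>w x * indicator A x\<bar> \<partial>M_add) = (\<integral>x. w x * indicator A x \<partial>M_add)"
  by (intro Bochner_Integration.integral_cong) (auto simp: w_pos abs_mult less_imp_le split: split_indicator)

lemma v_bounds:
  assumes "A \<in> sets M_add"
  shows "0 \<le> v A" "v A \<le> 2 * C * (\<integral>x. w x * indicator A x \<partial>M_add)"
  using Lam_tendsto(2)[OF wA_int[OF assms]] unfolding v_def int_wA_abs by auto

lemma v_tendsto:
  fixes A :: "nat \<Rightarrow> real set"
  assumes A: "\<And>i. A i \<in> sets M_add"
  shows "(\<lambda>n. v (\<Union>i<n. A i)) \<longlonglongrightarrow> v (\<Union>i. A i)"
proof -
  have U: "(\<Union>i<n. A i) \<in> sets M_add" for n using A by auto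
  have U': "(\<Union>i. A i) \<in> sets M_add" using A by auto
  have lim: "(\<lambda>n. w x * indicator (\<Union>i<n. A i) x) \<longlonglongrightarrow> w x * indicator (\<Union>i. A i) x" for x
    by (intro tendsto_mult tendsto_const LIMSEQ_indicator_UN)
  have bnd: "\<bar>w x * indicator B x\<bar> \<le> w x" for x B
    by (auto simp: w_pos abs_mult less_imp_le split: split_indicator)
  have "(\<lambda>n. \<integral>x. \<bar>w x * indicator (\<Union>i<n. A i) x - w x * indicator (\<Union>i. A i) x\<bar> \<partial>M_add) \<longlonglongrightarrow> 0"
    by (rule L1_dom[where w=w]) (use U U' lim bnd w_int in auto)
  then have 1: "(\<lambda>n. Lam (\<lambda>x. w x * indicator (\<Union>i<n. A i) x)) \<longlonglongrightarrow> Lam (\<lambda>x. w x * indicator (\<Union>i. A i) x)"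
    by (intro Lam_L1 wA_int U U')
  have 2: "(\<lambda>n. \<integral>x. w x * indicator (\<Union>i<n. A i) x \<partial>M_add) \<longlonglongrightarrow> (\<integral>x. w x * indicator (\<Union>i. A i) x \<partial>M_add)"
    by (rule integral_dominated_convergence[where w=w]) (use U U' lim bnd w_int in auto)
  show ?thesis unfolding v_def by (intro tendsto_intros 1 2)
qed

lemma v_finite_add:
  fixes A :: "nat \<Rightarrow> real set"
  assumes A: "\<And>i. A i \<in> sets M_add" and d: "disjoint_family A"
  shows "v (\<Union>i<n. A i) = (\<Sum>i<n. v (A i))"
proof -
  have ind: "w x * indicator (\<Union>i<n. A i) x = (\<Sum>i<n. w x * indicator (A i) x)" for x
  proof -
    have "indicator (\<Union>i<n. A i) x = (\<Sum>i<n. indicator (A i) x :: real)"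
      by (rule indicator_UN_disjoint[OF finite_lessThan]) (use d in \<open>auto simp: disjoint_family_on_def\<close>)
    then show ?thesis by (simp add: sum_distrib_left)
  qed
  have "Lam (\<lambda>x. w x * indicator (\<Union>i<n. A i) x) = Lam (\<lambda>x. \<Sum>i<n. w x * indicator (A i) x)"
    by (simp only: ind)
  also have "\<dots> = (\<Sum>i<n. Lam (\<lambda>x. w x * indicator (A i) x))"
    by (rule Lam_sum) (auto intro: wA_int A)
  finally have 1: "Lam (\<lambda>x. w x * indicator (\<Union>i<n. A i) x) = (\<Sum>i<n. Lam (\<lambda>x. w x * indicator (A i) x))" .
  have 2: "(\<integral>x. w x * indicator (\<Union>i<n. A i) x \<partial>M_add) = (\<Sum>i<n. (\<integral>x. w x * indicator (A i) x \<partial>M_add))"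
  proof -
    have e: "(\<lambda>x. w x * indicator (\<Union>i<n. A i) x) = (\<lambda>x. \<Sum>i<n. w x * indicator (A i) x)"
      using ind by auto
    show ?thesis unfolding e by (rule Bochner_Integration.integral_sum) (auto intro: wA_int A)
  qed
  show ?thesis unfolding v_def 1 2 by (simp add: sum.distrib sum_distrib_left)
qed

definition \<mu> :: "real set \<Rightarrow> ennreal" where "\<mu> A = ennreal (v A)"

lemma mu_ca: "countably_additive (sets M_add) \<mu>"
  unfolding countably_additive_def
proof (intro allI impI)
  fix A :: "nat \<Rightarrow> real set"
  assume A: "range A \<subseteq> sets M_add" and d: "disjoint_family A" and "\<Union>(range A) \<in> sets M_add"
  then have A': "\<And>i. A i \<in> sets M_add" by auto
  have "(\<lambda>n. v (\<Union>i<n. A i)) \<longlonglongrightarrow> v (\<Union>i. A i)" by (rule v_tendsto) (rule A')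
  then have "(\<lambda>n. \<Sum>i<n. v (A i)) \<longlonglongrightarrow> v (\<Union>i. A i)"
    using v_finite_add[OF A' d] by simp
  then have s: "(\<lambda>i. v (A i)) sums v (\<Union>i. A i)" by (simp add: sums_def)
  show "(\<Sum>i. \<mu> (A i)) = \<mu> (\<Union>(range A))"
    unfolding \<mu>_def
    by (subst suminf_ennreal2) (use s sums_summable[OF s] v_bounds A' in \<open>auto simp: sums_iff\<close>)
qed

definition NN :: "real measure" where "NN = measure_of (space M_add) (sets M_add) \<mu>"

lemma sets_NN[simp]: "sets NN = sets M_add"
  unfolding NN_def by (rule sets.sets_measure_of_eq)

lemma emeasure_NN: "A \<in> sets M_add \<Longrightarrow> emeasure NN A = \<mu> A"
  unfolding NN_def
  by (rule emeasure_measure_of_sigma[OF sets.sigma_algebra_axioms _ mu_ca])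
     (auto simp: positive_def \<mu>_def v_def Lam_zero)

end


context wsctx
begin

lemma NN_ac: "absolutely_continuous M_add NN"
  unfolding absolutely_continuous_def
proof
  fix A assume A: "A \<in> null_sets M_add"
  then have As: "A \<in> sets M_add" by auto
  have ae: "AE x in M_add. w x * indicator A x = 0"
    using AE_not_in[OF A] by eventually_elim auto
  have "Lam (\<lambda>x. w x * indicator A x) = Lam (\<lambda>x. 0)"
    by (rule Lam_cong_AE) (use wA_int[OF As] ae in auto)
  moreover have "(\<integral>x. w x * indicator A x \<partial>M_add) = 0"
    by (rule integral_eq_zero_AE[OF ae])
  ultimately have "emeasure NN A = 0"
    using emeasure_NN[OF As] by (simp add: \<mu>_def v_def Lam_zero)
  then show "A \<in> null_sets NN" using As by (auto intro: null_setsI)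
qed

definition rho :: "real \<Rightarrow> ennreal" where
  "rho = (SOME f. f \<in> borel_measurable M_add \<and> density M_add f = NN)"

lemma rho: "rho \<in> borel_measurable M_add" "density M_add rho = NN"
proof -
  have "\<exists>f \<in> borel_measurable M_add. density M_add f = NN"
    by (rule sigma_finite_measure.Radon_Nikodym[OF sigma_finite_M_add NN_ac sets_NN])
  then have "\<exists>f. f \<in> borel_measurable M_add \<and> density M_add f = NN" by blast
  from someI_ex[OF this] show "rho \<in> borel_measurable M_add" "density M_add rho = NN"
    unfolding rho_def by auto
qed

lemma rho_meas[measurable]: "rho \<in> borel_measurable M_add" by (rule rho(1))

lemma rho_int: "A \<in> sets M_add \<Longrightarrow> (\<integral>\<^sup>+x. rho x * indicator A x \<partial>M_add) = ennreal (v A)"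
  using emeasure_density[OF rho(1), of A] emeasure_NN[of A] rho(2) by (simp add: \<mu>_def)

lemma wA_nn: "(\<integral>\<^sup>+x. ennreal (2 * C * w x) * indicator A x \<partial>M_add) = ennreal (2 * C * (\<integral>x. w x * indicator A x \<partial>M_add))"
  if A: "A \<in> sets M_add" for A
proof -
  have "(\<integral>\<^sup>+x. ennreal (2 * C * w x) * indicator A x \<partial>M_add) = (\<integral>\<^sup>+x. ennreal (2 * C * (w x * indicator A x)) \<partial>M_add)"
    by (intro nn_integral_cong) (auto split: split_indicator)
  also have "\<dots> = ennreal (\<integral>x. 2 * C * (w x * indicator A x) \<partial>M_add)"
    by (rule nn_integral_eq_integral) (use wA_int[OF A] C_nn w_pos in \<open>auto intro!: AE_I2 simp: less_imp_le\<close>)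
  finally show ?thesis by simp
qed

lemma rho_bound: "AE x in M_add. rho x \<le> ennreal (2 * C * w x)"
proof -
  define A where "A = {x \<in> space M_add. ennreal (2 * C * w x) < rho x}"
  have A: "A \<in> sets M_add" unfolding A_def by measurable
  have fin: "(\<integral>\<^sup>+x. ennreal (2 * C * w x) * indicator A x \<partial>M_add) \<noteq> \<infinity>"
    using wA_nn[OF A] by simp
  have le: "(\<integral>\<^sup>+x. rho x * indicator A x \<partial>M_add) \<le> (\<integral>\<^sup>+x. ennreal (2 * C * w x) * indicator A x \<partial>M_add)"
    unfolding rho_int[OF A] wA_nn[OF A] using v_bounds[OF A] by (simp add: ennreal_leI)
  have "(\<integral>\<^sup>+x. rho x * indicator A x - ennreal (2 * C * w x) * indicator A x \<partial>M_add)
     = (\<integral>\<^sup>+x. rho x * indicator A x \<partial>M_add) - (\<integral>\<^sup>+x. ennreal (2 * C * w x) * indicator A x \<partial>M_add)"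
    by (rule nn_integral_diff) (use A fin in \<open>auto intro!: AE_I2 simp: A_def less_imp_le split: split_indicator\<close>)
  also have "\<dots> = 0" using le fin by (intro diff_eq_0_ennreal) (auto simp: top.not_eq_extremum intro: le_less_trans)
  finally have "AE x in M_add. rho x * indicator A x - ennreal (2 * C * w x) * indicator A x = 0"
    by (subst (asm) nn_integral_0_iff_AE) (use A in auto)
  with AE_space show ?thesis
  proof eventually_elim
    case (elim x)
    show ?case
    proof (cases "x \<in> A")
      case True
      with elim have "rho x \<le> ennreal (2 * C * w x)" by (auto intro: ennreal_minus_eq_0)
      with True show ?thesis by (auto simp: A_def)
    next
      case False
      then show ?thesis using elim by (auto simp: A_def not_less)
    qed
  qed
qed

end


context wsctx
begin

definition LL :: "real \<Rightarrow> real" where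
  "LL x = max (- C) (min C (enn2real (rho x) / w x - C))"

lemma LL_meas[measurable]: "LL \<in> borel_measurable M_add"
  unfolding LL_def by measurable

lemma LL_bnd: "\<bar>LL x\<bar> \<le> C"
  unfolding LL_def using C_nn by auto

lemma LL_ae: "AE x in M_add. LL x * w x = enn2real (rho x) - C * w x"
  using rho_bound
proof eventually_elim
  case (elim x)
  have wp: "0 < w x" by (rule w_pos)
  have "enn2real (rho x) \<le> 2 * C * w x"
    using enn2real_mono[OF elim] C_nn wp by (simp add: less_imp_le)
  moreover have "0 \<le> enn2real (rho x)" by simp
  ultimately have "enn2real (rho x) / w x \<le> 2 * C" "0 \<le> enn2real (rho x) / w x"
    using wp by (auto simp: divide_le_eq mult.commute)
  then have "LL x = enn2real (rho x) / w x - C" unfolding LL_def by auto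
  then show ?case using wp by (simp add: field_simps)
qed

lemma LL_int: "integrable M_add h \<Longrightarrow> integrable M_add (\<lambda>x. LL x * h x)"
  by (rule int_GH(1)) (auto intro: LL_bnd)

lemma rho_real_int:
  assumes A: "A \<in> sets M_add"
  shows "integrable M_add (\<lambda>x. enn2real (rho x) * indicator A x)"
    "(\<integral>x. enn2real (rho x) * indicator A x \<partial>M_add) = v A"
proof -
  show int: "integrable M_add (\<lambda>x. enn2real (rho x) * indicator A x)"
  proof (rule Bochner_Integration.integrable_bound[where f="\<lambda>x. 2 * C * w x"])
    show "integrable M_add (\<lambda>x. 2 * C * w x)" using w_int by simp
    show "AE x in M_add. norm (enn2real (rho x) * indicator A x) \<le> norm (2 * C * w x)"
      using rho_bound
    proof eventually_elim
      case (elim x)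
      have "enn2real (rho x) \<le> 2 * C * w x"
        using enn2real_mono[OF elim] C_nn w_pos[of x] by (simp add: less_imp_le)
      then show ?case using C_nn w_pos[of x] by (auto split: split_indicator)
    qed
  qed (use A in auto)
  have "(\<integral>x. enn2real (rho x) * indicator A x \<partial>M_add) = enn2real (\<integral>\<^sup>+x. ennreal (enn2real (rho x) * indicator A x) \<partial>M_add)"
    by (rule integral_eq_nn_integral) (use A in auto)
  also have "(\<integral>\<^sup>+x. ennreal (enn2real (rho x) * indicator A x) \<partial>M_add) = (\<integral>\<^sup>+x. rho x * indicator A x \<partial>M_add)"
  proof (rule nn_integral_cong_AE)
    show "AE x in M_add. ennreal (enn2real (rho x) * indicator A x) = rho x * indicator A x"
      using rho_bound
    proof eventually_elim
      case (elim x)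
      then have "rho x \<noteq> top" by (auto simp: top_unique)
      then show ?case by (auto split: split_indicator simp: less_top ennreal_enn2real)
    qed
  qed
  also have "\<dots> = ennreal (v A)" by (rule rho_int[OF A])
  finally show "(\<integral>x. enn2real (rho x) * indicator A x \<partial>M_add) = v A"
    using v_bounds(1)[OF A] by simp
qed

lemma K:
  assumes A: "A \<in> sets M_add"
  shows "(\<integral>x. LL x * (w x * indicator A x) \<partial>M_add) = Lam (\<lambda>x. w x * indicator A x)"
proof -
  have "(\<integral>x. LL x * (w x * indicator A x) \<partial>M_add)
      = (\<integral>x. enn2real (rho x) * indicator A x - C * (w x * indicator A x) \<partial>M_add)"
  proof (rule integral_cong_AE)
    show "AE x in M_add. LL x * (w x * indicator A x) = enn2real (rho x) * indicator A x - C * (w x * indicator A x)"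
      using LL_ae by eventually_elim (auto split: split_indicator)
  qed (use A in auto)
  also have "\<dots> = (\<integral>x. enn2real (rho x) * indicator A x \<partial>M_add) - C * (\<integral>x. w x * indicator A x \<partial>M_add)"
    using rho_real_int(1)[OF A] wA_int[OF A] by simp
  also have "\<dots> = Lam (\<lambda>x. w x * indicator A x)"
    unfolding rho_real_int(2)[OF A] v_def by simp
  finally show ?thesis .
qed

lemma sets_Mw[simp]: "sets (density M_add w) = sets M_add" by simp
lemma space_Mw[simp]: "space (density M_add w) = space M_add" by simp

lemma int_Mw:
  "integrable (density M_add w) k \<Longrightarrow> integrable M_add (\<lambda>x. w x * k x)"
  using integrable_density[of k M_add w] w_pos by (auto simp: less_imp_le)

lemma Q:
  assumes "integrable (density M_add w) k"
  shows "Lam (\<lambda>x. w x * k x) = (\<integral>x. LL x * (w x * k x) \<partial>M_add)"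
  using assms
proof (induct rule: integrable_induct)
  case (base A c)
  then have A: "A \<in> sets M_add" by simp
  have "Lam (\<lambda>x. w x * (indicator A x *\<^sub>R c)) = Lam (\<lambda>x. c * (w x * indicator A x))"
    by (simp add: mult_ac)
  also have "\<dots> = c * Lam (\<lambda>x. w x * indicator A x)" by (rule Lam_cmult[OF wA_int[OF A]])
  also have "\<dots> = c * (\<integral>x. LL x * (w x * indicator A x) \<partial>M_add)" by (simp add: K[OF A])
  also have "\<dots> = (\<integral>x. LL x * (w x * (indicator A x *\<^sub>R c)) \<partial>M_add)"
    by (simp add: mult_ac)
  finally show ?case .
next
  case (add f g)
  have "Lam (\<lambda>x. w x * (f x + g x)) = Lam (\<lambda>x. w x * f x + w x * g x)" by (simp add: algebra_simps)
  also have "\<dots> = Lam (\<lambda>x. w x * f x) + Lam (\<lambda>x. w x * g x)"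
    by (rule Lam_add) (use add int_Mw in auto)
  also have "\<dots> = (\<integral>x. LL x * (w x * f x) + LL x * (w x * g x) \<partial>M_add)"
    using add LL_int int_Mw by simp
  also have "\<dots> = (\<integral>x. LL x * (w x * (f x + g x)) \<partial>M_add)" by (simp add: algebra_simps)
  finally show ?case .
next
  case (lim f s)
  have fi: "integrable M_add (\<lambda>x. w x * f x)" by (rule int_Mw[OF lim(5)])
  have si: "integrable M_add (\<lambda>x. w x * s i x)" for i by (rule int_Mw[OF lim(1)])
  have pt: "(\<lambda>i. w x * s i x) \<longlonglongrightarrow> w x * f x" if "x \<in> space M_add" for x
    using lim(3)[of x] that by (auto intro: tendsto_mult)
  have bd: "\<bar>w x * s i x\<bar> \<le> 2 * \<bar>w x * f x\<bar>" if "x \<in> space M_add" for x i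
    using lim(4)[of x i] that w_pos[of x] by (auto simp: abs_mult less_imp_le intro: mult_left_mono)
  have "(\<lambda>n. \<integral>x. \<bar>w x * s n x - w x * f x\<bar> \<partial>M_add) \<longlonglongrightarrow> 0"
    by (rule L1_dom[where w="\<lambda>x. 2 * \<bar>w x * f x\<bar>"]) (use fi si pt bd in \<open>auto intro!: AE_I2\<close>)
  then have 1: "(\<lambda>i. Lam (\<lambda>x. w x * s i x)) \<longlonglongrightarrow> Lam (\<lambda>x. w x * f x)"
    by (rule Lam_L1[OF fi si])
  have 2: "(\<lambda>i. \<integral>x. LL x * (w x * s i x) \<partial>M_add) \<longlonglongrightarrow> (\<integral>x. LL x * (w x * f x) \<partial>M_add)"
  proof (rule integral_dominated_convergence[where w="\<lambda>x. C * (2 * \<bar>w x * f x\<bar>)"])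
    show "AE x in M_add. (\<lambda>i. LL x * (w x * s i x)) \<longlonglongrightarrow> LL x * (w x * f x)"
      by (rule AE_I2) (rule tendsto_mult_left[OF pt])
    show "AE x in M_add. norm (LL x * (w x * s i x)) \<le> C * (2 * \<bar>w x * f x\<bar>)" for i
    proof (rule AE_I2)
      fix x assume x: "x \<in> space M_add"
      have "\<bar>LL x * (w x * s i x)\<bar> = \<bar>LL x\<bar> * \<bar>w x * s i x\<bar>" by (simp add: abs_mult)
      also have "\<dots> \<le> C * (2 * \<bar>w x * f x\<bar>)" by (rule mult_mono[OF LL_bnd bd[OF x]]) (use C_nn in auto)
      finally show "norm (LL x * (w x * s i x)) \<le> C * (2 * \<bar>w x * f x\<bar>)" by simp
    qed
  qed (use fi si in auto)
  have "(\<lambda>i. Lam (\<lambda>x. w x * s i x)) = (\<lambda>i. \<integral>x. LL x * (w x * s i x) \<partial>M_add)"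
    using lim(2) by simp
  with 1 2 show ?case using LIMSEQ_unique by metis
qed

lemma LL_wstar: "wstar_lim M_add F G LL"
  unfolding wstar_lim_def
proof safe
  show "Linf M_add LL" unfolding Linf_def using LL_bnd by (auto intro!: AE_I2)
next
  fix h :: "real \<Rightarrow> real" assume h: "integrable M_add h"
  have hm: "h \<in> borel_measurable M_add" using h by auto
  define k where "k x = h x / w x" for x
  have hk: "(\<lambda>x. w x * k x) = h"
  proof (rule ext)
    fix x have "w x \<noteq> 0" using w_pos[of x] by simp
    then show "w x * k x = h x" by (simp add: k_def)
  qed
  have km: "k \<in> borel_measurable M_add" unfolding k_def using hm by measurable
  have "integrable (density M_add w) k \<longleftrightarrow> integrable M_add (\<lambda>x. w x *\<^sub>R k x)"
    by (rule integrable_density) (use km w_pos in \<open>auto intro: less_imp_le\<close>)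
  then have "integrable (density M_add w) k" using h hk by simp
  have hk': "\<And>x. w x * k x = h x" using hk by metis
  from Q[OF \<open>integrable (density M_add w) k\<close>] hk hk' have "Lam h = (\<integral>x. LL x * h x \<partial>M_add)" by simp
  with Lam_tendsto(1)[OF h] show "((\<lambda>i. \<integral>x. G i x * h x \<partial>M_add) \<longlongrightarrow> (\<integral>x. LL x * h x \<partial>M_add)) F"
    by simp
qed

end

lemma wstar_exists:
  fixes F :: "'i filter" and G :: "'i \<Rightarrow> real \<Rightarrow> real" and C :: real
  assumes "F \<noteq> bot" "\<forall>P. eventually P F \<or> eventually (\<lambda>x. \<not> P x) F" "0 \<le> C"
    and "eventually (\<lambda>i. G i \<in> borel_measurable M_add \<and> (AE x in M_add. \<bar>G i x\<bar> \<le> C)) F"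
  shows "\<exists>L. wstar_lim M_add F G L \<and> (\<forall>x. \<bar>L x\<bar> \<le> C) \<and> L \<in> borel_measurable M_add"
proof -
  interpret wsctx F G C using assms by unfold_locales
  show ?thesis using LL_wstar LL_bnd LL_meas by blast
qed



lemma meas_comp:
  fixes \<phi> g k :: "real \<Rightarrow> real"
  assumes S: "S \<in> sets lebesgue" and T: "T \<in> sets lebesgue"
    and \<phi>: "\<phi> \<in> borel_measurable (lebesgue_on T)"
    and gT: "\<And>x. x \<in> S \<Longrightarrow> g x \<in> T" and kg: "\<And>x. x \<in> S \<Longrightarrow> k (g x) = x"
    and gk: "\<And>y. y \<in> T \<Longrightarrow> g (k y) = y" and kd: "k differentiable_on T"
  shows "(\<lambda>x. \<phi> (g x)) \<in> borel_measurable (lebesgue_on S)"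
  unfolding borel_measurable_lebesgue_on_preimage_borel[OF S]
proof (intro allI impI)
  fix B :: "real set" assume B: "B \<in> sets borel"
  have P: "{y \<in> T. \<phi> y \<in> B} \<in> sets lebesgue"
    using \<phi> B unfolding borel_measurable_lebesgue_on_preimage_borel[OF T] by blast
  have "k ` {y \<in> T. \<phi> y \<in> B} \<in> sets lebesgue"
    by (rule differentiable_image_in_sets_lebesgue[OF P]) (auto intro: differentiable_on_subset[OF kd])
  moreover have "{x \<in> S. \<phi> (g x) \<in> B} = S \<inter> k ` {y \<in> T. \<phi> y \<in> B}"
  proof safe
    fix x assume "x \<in> S" "\<phi> (g x) \<in> B"
    then show "x \<in> k ` {y \<in> T. \<phi> y \<in> B}"
      using gT kg by (intro image_eqI[of _ _ "g x"]) auto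
  next
    fix y assume "k y \<in> S" "y \<in> T" "\<phi> y \<in> B"
    then show "\<phi> (g (k y)) \<in> B" using gk by simp
  qed
  ultimately show "{x \<in> S. \<phi> (g x) \<in> B} \<in> sets lebesgue" using S by auto
qed

lemma bm_M_mult: "borel_measurable M_mult = borel_measurable (lebesgue_on {1..})"
  unfolding M_mult_def by (rule measurable_cong_sets) auto

lemma bm_M_add: "borel_measurable M_add = borel_measurable (lebesgue_on {0..})"
  unfolding M_add_def by simp

lemma exp_image: "exp ` {0..} = {1::real..}"
proof safe
  fix y :: real assume "1 \<le> y"
  then show "y \<in> exp ` {0..}" by (intro image_eqI[of _ _ "ln y"]) auto
qed auto

lemma ln_diff: "0 < (x::real) \<Longrightarrow> ln differentiable (at x within S)"
  using DERIV_ln[of x] real_differentiable_def by (metis has_field_derivative_at_within)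
lemma exp_diff: "(exp::real\<Rightarrow>real) differentiable (at x within S)"
  by (metis DERIV_exp has_field_derivative_at_within real_differentiable_def)
lemma one_le_mult': "1 \<le> (r::real) \<Longrightarrow> 1 \<le> y \<Longrightarrow> 1 \<le> r * y"
  by (metis mult_mono mult_1 zero_le_one order_trans)

lemma meas_exp: fixes \<phi> :: "real \<Rightarrow> real" assumes "\<phi> \<in> borel_measurable M_mult" shows "(\<lambda>x. \<phi> (exp x)) \<in> borel_measurable M_add"
  unfolding bm_M_add using assms unfolding bm_M_mult
  by (intro meas_comp[where \<phi>=\<phi> and g=exp and k=ln and T="{1..}" and S="{0..}"])
     (auto intro!: derivative_intros ln_diff exp_diff simp: differentiable_on_def intro: differentiable_at_withinI one_le_mult')

lemma meas_ln: fixes \<psi> :: "real \<Rightarrow> real" assumes "\<psi> \<in> borel_measurable M_add" shows "(\<lambda>y. \<psi> (ln y)) \<in> borel_measurable M_mult"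
  unfolding bm_M_mult using assms unfolding bm_M_add
  by (intro meas_comp[where \<phi>=\<psi> and g=ln and k=exp and T="{0..}" and S="{1..}"])
     (auto intro!: derivative_intros ln_diff exp_diff simp: differentiable_on_def intro: differentiable_at_withinI one_le_mult')

lemma meas_scale: fixes \<phi> :: "real \<Rightarrow> real" assumes "\<phi> \<in> borel_measurable M_mult" "1 \<le> r" shows "(\<lambda>y. \<phi> (r * y)) \<in> borel_measurable M_mult"
  unfolding bm_M_mult using assms unfolding bm_M_mult
  by (intro meas_comp[where \<phi>=\<phi> and g="\<lambda>y. r * y" and k="\<lambda>y. y / r" and T="{1..}" and S="{1..}"])
     (auto intro!: derivative_intros simp: differentiable_on_def intro: differentiable_at_withinI one_le_mult')

lemma meas_shift: fixes \<phi> :: "real \<Rightarrow> real" assumes "\<phi> \<in> borel_measurable M_mult" "0 \<le> s" shows "(\<lambda>x. \<phi> (exp (x + s))) \<in> borel_measurable M_add"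
  unfolding bm_M_add using assms unfolding bm_M_mult
  by (intro meas_comp[where \<phi>=\<phi> and g="\<lambda>x. exp (x + s)" and k="\<lambda>y. ln y - s" and T="{1..}" and S="{0..}"])
     (auto intro!: derivative_intros ln_diff exp_diff simp: differentiable_on_def intro: differentiable_at_withinI one_le_mult')



lemma ae_shift:
  fixes f :: "real \<Rightarrow> real"
  assumes ae: "AE y in M_mult. \<bar>f y\<bar> \<le> C" and s: "0 \<le> s"
  shows "AE x in M_add. \<bar>f (exp (x + s))\<bar> \<le> C"
proof -
  have "AE y in lebesgue_on {1..}. 0 < ennreal (1 / y) \<longrightarrow> \<bar>f y\<bar> \<le> C"
  proof -
    have g: "(\<lambda>t::real. ennreal (1 / t)) \<in> borel_measurable (lebesgue_on {1..})"
      by (rule measurable_restrict_space1) (simp add: measurable_completion measurable_lborel1)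
    show ?thesis using ae unfolding M_mult_def by (subst (asm) AE_density[OF g]) auto
  qed
  then have "AE y in lebesgue_on {1..}. \<bar>f y\<bar> \<le> C"
    by (rule AE_mp) (auto intro!: AE_I2 simp: space_restrict_space)
  then have "AE y in lebesgue. y \<in> {1..} \<longrightarrow> \<bar>f y\<bar> \<le> C"
    by (subst (asm) AE_restrict_space_iff) auto
  then obtain N where N0: "{y \<in> space lebesgue. \<not> (y \<in> {1..} \<longrightarrow> \<bar>f y\<bar> \<le> C)} \<subseteq> N"
    "emeasure lebesgue N = 0" "N \<in> sets lebesgue"
    by (erule AE_E)
  then have N: "N \<in> null_sets lebesgue" "{y \<in> space lebesgue. \<not> (y \<in> {1..} \<longrightarrow> \<bar>f y\<bar> \<le> C)} \<subseteq> N"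
    by (auto intro: null_setsI)
  define N' where "N' = (\<lambda>y. ln y - s) ` (N \<inter> {1..})"
  have "negligible N" using N(1) by (simp add: negligible_iff_null_sets)
  then have negN: "negligible (N \<inter> {1..})" by (rule negligible_subset) auto
  have "negligible N'" unfolding N'_def
  proof (intro negligible_differentiable_image_negligible[OF _ negN])
    show "(\<lambda>y. ln y - s) differentiable_on (N \<inter> {1..})"
      unfolding differentiable_on_def
    proof
      fix y assume "y \<in> N \<inter> {1..}"
      then have "0 < y" by auto
      then show "(\<lambda>y. ln y - s) differentiable at y within N \<inter> {1..}"
        by (intro differentiable_diff ln_diff differentiable_const)
    qed
  qed simp
  then have N': "N' \<in> null_sets lebesgue" by (simp add: negligible_iff_null_sets)
  have "AE x in lebesgue. x \<in> {0..} \<longrightarrow> \<bar>f (exp (x + s))\<bar> \<le> C"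
  proof (rule AE_I'[OF N'])
    show "{x \<in> space lebesgue. \<not> (x \<in> {0..} \<longrightarrow> \<bar>f (exp (x + s))\<bar> \<le> C)} \<subseteq> N'"
    proof (rule subsetI)
      fix x :: real assume "x \<in> {x \<in> space lebesgue. \<not> (x \<in> {0..} \<longrightarrow> \<bar>f (exp (x + s))\<bar> \<le> C)}"
      then have x: "x \<in> {0..}" "\<not> \<bar>f (exp (x + s))\<bar> \<le> C" by auto
      have "1 \<le> exp (x + s)" using x s by auto
      then have "exp (x + s) \<in> N \<inter> {1..}" using N(2) x by auto
      moreover have "x = ln (exp (x + s)) - s" by simp
      ultimately show "x \<in> N'" unfolding N'_def by blast
    qed
  qed
  then show ?thesis unfolding M_add_def by (subst AE_restrict_space_iff) auto
qed

lemma int_M_add: fixes k :: "real \<Rightarrow> real" shows "integrable M_add k \<longleftrightarrow> k absolutely_integrable_on {0..}"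
  unfolding M_add_def set_integrable_def by (subst integrable_restrict_space) auto

lemma integral_M_add: fixes k :: "real \<Rightarrow> real" shows "integral\<^sup>L M_add k = (LINT x:{0..}|lebesgue. k x)"
  unfolding M_add_def set_lebesgue_integral_def by (subst integral_restrict_space) auto

lemma int_M_mult:
  fixes \<phi> :: "real \<Rightarrow> real"
  assumes "\<phi> \<in> borel_measurable M_mult"
  shows "integrable M_mult \<phi> \<longleftrightarrow> (\<lambda>t. \<phi> t / t) absolutely_integrable_on {1..}"
    "integral\<^sup>L M_mult \<phi> = (LINT t:{1..}|lebesgue. \<phi> t / t)"
proof -
  have m: "\<phi> \<in> borel_measurable (lebesgue_on {1..})" using assms by (simp only: bm_M_mult)
  have g: "(\<lambda>t::real. 1 / t) \<in> borel_measurable (lebesgue_on {1..})"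
    by (rule measurable_restrict_space1) (simp add: measurable_completion measurable_lborel1)
  have nn: "AE t in lebesgue_on {1..}. 0 \<le> 1 / (t::real)"
    by (rule AE_I2) (auto simp: space_restrict_space)
  have "integrable M_mult \<phi> \<longleftrightarrow> integrable (lebesgue_on {1..}) (\<lambda>t. (1 / t) *\<^sub>R \<phi> t)"
    unfolding M_mult_def by (rule integrable_density[OF m g nn])
  also have "\<dots> \<longleftrightarrow> (\<lambda>t. \<phi> t / t) absolutely_integrable_on {1..}"
    unfolding set_integrable_def by (subst integrable_restrict_space) auto
  finally show "integrable M_mult \<phi> \<longleftrightarrow> (\<lambda>t. \<phi> t / t) absolutely_integrable_on {1..}" .
  have "integral\<^sup>L M_mult \<phi> = integral\<^sup>L (lebesgue_on {1..}) (\<lambda>t. (1 / t) *\<^sub>R \<phi> t)"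
    unfolding M_mult_def by (rule integral_density[OF m g nn])
  also have "\<dots> = (LINT t:{1..}|lebesgue. \<phi> t / t)"
    unfolding set_lebesgue_integral_def by (subst integral_restrict_space) auto
  finally show "integral\<^sup>L M_mult \<phi> = (LINT t:{1..}|lebesgue. \<phi> t / t)" .
qed

lemma CV:
  fixes \<phi> :: "real \<Rightarrow> real"
  assumes m: "\<phi> \<in> borel_measurable M_mult"
  shows "integrable M_mult \<phi> \<longleftrightarrow> integrable M_add (\<lambda>x. \<phi> (exp x))"
    "integral\<^sup>L M_mult \<phi> = integral\<^sup>L M_add (\<lambda>x. \<phi> (exp x))"
proof -
  have der: "\<And>x. x \<in> {0..} \<Longrightarrow> (exp has_field_derivative exp x) (at x within {0..})"
    by (metis DERIV_exp has_field_derivative_at_within)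
  have inj: "inj_on exp {0::real..}" by (auto simp: inj_on_def)
  have eq: "(\<lambda>x. \<bar>exp x\<bar> * (\<phi> (exp x) / exp x)) = (\<lambda>x. \<phi> (exp x))" by (simp add: fun_eq_iff)
  have cv: "(\<lambda>x. \<bar>exp x\<bar> * (\<phi> (exp x) / exp x)) absolutely_integrable_on {0..} \<and>
      integral {0..} (\<lambda>x. \<bar>exp x\<bar> * (\<phi> (exp x) / exp x)) = b
    \<longleftrightarrow> (\<lambda>t. \<phi> t / t) absolutely_integrable_on exp ` {0..} \<and> integral (exp ` {0..}) (\<lambda>t. \<phi> t / t) = b" for b
    by (rule has_absolute_integral_change_of_variables_1'[OF _ der inj]) auto
  then have cv': "(\<lambda>x. \<phi> (exp x)) absolutely_integrable_on {0..} \<and> integral {0..} (\<lambda>x. \<phi> (exp x)) = b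
    \<longleftrightarrow> (\<lambda>t. \<phi> t / t) absolutely_integrable_on {1..} \<and> integral {1..} (\<lambda>t. \<phi> t / t) = b" for b
    unfolding eq exp_image by blast
  show i: "integrable M_mult \<phi> \<longleftrightarrow> integrable M_add (\<lambda>x. \<phi> (exp x))"
    unfolding int_M_mult(1)[OF m] int_M_add using cv' by blast
  show "integral\<^sup>L M_mult \<phi> = integral\<^sup>L M_add (\<lambda>x. \<phi> (exp x))"
  proof (cases "integrable M_mult \<phi>")
    case True
    then have a: "(\<lambda>t. \<phi> t / t) absolutely_integrable_on {1..}" using int_M_mult(1)[OF m] by simp
    then have b: "(\<lambda>x. \<phi> (exp x)) absolutely_integrable_on {0..}" using cv' by blast
    have "integral {0..} (\<lambda>x. \<phi> (exp x)) = integral {1..} (\<lambda>t. \<phi> t / t)"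
      using cv'[of "integral {1..} (\<lambda>t. \<phi> t / t)"] a by blast
    then show ?thesis
      unfolding int_M_mult(2)[OF m] integral_M_add
      using set_lebesgue_integral_eq_integral(2)[OF a] set_lebesgue_integral_eq_integral(2)[OF b] by simp
  next
    case False
    then have "\<not> integrable M_add (\<lambda>x. \<phi> (exp x))" using i by simp
    with False show ?thesis by (simp add: not_integrable_integral_eq)
  qed
qed



lemma Lim_cong_ev:
  assumes "eventually (\<lambda>x. f x = g x) F"
  shows "Lim F f = Lim F g"
proof -
  have eq: "\<And>l. (f \<longlongrightarrow> l) F \<longleftrightarrow> (g \<longlongrightarrow> l) F" using assms by (rule tendsto_cong)
  show ?thesis unfolding Topological_Spaces.Lim_def by (simp only: eq)
qed

lemma Lim_filtermap: "Lim (filtermap g F) k = Lim F (\<lambda>x. k (g x))"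
  unfolding Topological_Spaces.Lim_def filterlim_filtermap ..

lemma borel_M_mult: "(f :: real \<Rightarrow> real) \<in> borel_measurable borel \<Longrightarrow> f \<in> borel_measurable M_mult"
  unfolding bm_M_mult
  by (intro measurable_restrict_space1) (simp add: measurable_completion measurable_lborel1)

lemma ind_int: "0 \<le> x \<Longrightarrow> integrable M_add (indicator {0..x} :: real \<Rightarrow> real)"
  unfolding M_add_def
  by (subst integrable_restrict_space) (auto simp: indicator_inter_arith[symmetric] Int_absorb1)

theorem theorem4p8:
  fixes \<eta> :: "nat filter" and t :: real and U :: "real filter" and f :: "real \<Rightarrow> real"
  assumes "free_ultrafilter_nat \<eta>" and "0 \<le> t" and "t < 1"
    and "is_ultrafilter U" and "eventually (\<lambda>x. 0 \<le> x) U"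
    and "\<forall>B. bounded B \<longrightarrow> \<not> eventually (\<lambda>x. x \<in> B) U"
    and "Linf M_mult f"
  shows "phi U (omega_filter \<eta> t) (W f) = psi U (omega_filter \<eta> t) f"
proof -
  define \<omega> where "\<omega> = omega_filter \<eta> t"
  have eta: "is_ultrafilter \<eta>" using assms(1) free_ultrafilter_nat_def by auto
  have om_nbot: "\<omega> \<noteq> bot"
    using eta unfolding \<omega>_def omega_filter_def is_ultrafilter_def by (simp add: filtermap_bot_iff)
  have om_ultra: "\<forall>P. eventually P \<omega> \<or> eventually (\<lambda>x. \<not> P x) \<omega>"
  proof
    fix P :: "real \<Rightarrow> bool"
    from eta have "eventually (\<lambda>n. P (real n + t)) \<eta> \<or> eventually (\<lambda>n. \<not> P (real n + t)) \<eta>"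
      unfolding is_ultrafilter_def by blast
    then show "eventually P \<omega> \<or> eventually (\<lambda>x. \<not> P x) \<omega>"
      unfolding \<omega>_def omega_filter_def by (simp add: eventually_filtermap)
  qed
  have om_pos: "eventually (\<lambda>s. 0 \<le> s) \<omega>"
    unfolding \<omega>_def omega_filter_def eventually_filtermap
    by (rule always_eventually) (use assms(2) in auto)
  from assms(7) obtain C0 where fm: "f \<in> borel_measurable M_mult" and fC: "AE y in M_mult. \<bar>f y\<bar> \<le> C0"
    unfolding Linf_def by auto
  define C where "C = max C0 0"
  have C: "0 \<le> C" by (simp add: C_def)
  have fC': "AE y in M_mult. \<bar>f y\<bar> \<le> C" using fC by eventually_elim (auto simp: C_def)
  define G where "G = (\<lambda>s x. W f (x + s))"
  have Gev: "eventually (\<lambda>s. G s \<in> borel_measurable M_add \<and> (AE x in M_add. \<bar>G s x\<bar> \<le> C)) \<omega>"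
    using om_pos by eventually_elim (auto simp: G_def W_def intro!: meas_shift fm ae_shift fC')
  obtain La where La: "wstar_lim M_add \<omega> G La" "\<forall>x. \<bar>La x\<bar> \<le> C" "La \<in> borel_measurable M_add"
    using wstar_exists[OF om_nbot om_ultra C Gev] by auto
  have A: "wstar_lim M_add \<omega> G (add_lim \<omega> (W f))"
    unfolding add_lim_def G_def[symmetric] by (rule someI[of _ La]) (rule La(1))
  define Lm where "Lm y = La (ln y)" for y
  have Lm: "wstar_lim M_mult (filtermap exp \<omega>) (\<lambda>r y. f (r * y)) Lm"
    unfolding wstar_lim_def
  proof safe
    show "Linf M_mult Lm"
      unfolding Linf_def Lm_def using meas_ln[OF La(3)] La(2) by (auto intro!: AE_I2)
  next
    fix h :: "real \<Rightarrow> real" assume h: "integrable M_mult h"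
    have hm: "h \<in> borel_measurable M_mult" using h by auto
    have h': "integrable M_add (\<lambda>x. h (exp x))" using CV(1)[OF hm] h by simp
    have lim: "((\<lambda>s. \<integral>x. G s x * h (exp x) \<partial>M_add) \<longlongrightarrow> (\<integral>x. La x * h (exp x) \<partial>M_add)) \<omega>"
      using La(1) h' unfolding wstar_lim_def by auto
    have eq1: "eventually (\<lambda>s. (\<integral>x. G s x * h (exp x) \<partial>M_add) = (\<integral>y. f (exp s * y) * h y \<partial>M_mult)) \<omega>"
      using om_pos
    proof eventually_elim
      case (elim s)
      have m: "(\<lambda>y. f (exp s * y) * h y) \<in> borel_measurable M_mult"
        using meas_scale[OF fm, of "exp s"] elim hm by auto
      have e: "exp (x + s) = exp s * exp x" for x by (simp add: exp_add)
      show ?case using CV(2)[OF m] by (simp add: G_def W_def e)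
    qed
    have m2: "(\<lambda>y. Lm y * h y) \<in> borel_measurable M_mult"
      using meas_ln[OF La(3)] hm unfolding Lm_def by auto
    have eq2: "(\<integral>y. Lm y * h y \<partial>M_mult) = (\<integral>x. La x * h (exp x) \<partial>M_add)"
      using CV(2)[OF m2] by (simp add: Lm_def)
    show "((\<lambda>r. \<integral>y. f (r * y) * h y \<partial>M_mult) \<longlongrightarrow> (\<integral>y. Lm y * h y \<partial>M_mult)) (filtermap exp \<omega>)"
      unfolding filterlim_filtermap eq2 using tendsto_cong[OF eq1] lim by simp
  qed
  have B: "wstar_lim M_mult (filtermap exp \<omega>) (\<lambda>r y. f (r * y)) (mult_lim \<omega> f)"
    unfolding mult_lim_def by (rule someI[of _ Lm]) (rule Lm)
  define a where "a x = (LINT u:{0..x}|lebesgue. add_lim \<omega> (W f) u)" for x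
  define b where "b y = (LINT u:{1..y}|lebesgue. mult_lim \<omega> f u / u)" for y
  have key: "b (exp x) = a x" if x: "0 \<le> x" for x
  proof -
    have ii: "integrable M_add (indicator {0..x} :: real \<Rightarrow> real)" by (rule ind_int[OF x])
    have "((\<lambda>s. \<integral>u. G s u * indicator {0..x} u \<partial>M_add) \<longlongrightarrow> (\<integral>u. add_lim \<omega> (W f) u * indicator {0..x} u \<partial>M_add)) \<omega>"
      using A ii unfolding wstar_lim_def by auto
    moreover have "(\<integral>u. add_lim \<omega> (W f) u * indicator {0..x} u \<partial>M_add) = a x"
      unfolding a_def integral_M_add set_lebesgue_integral_def
      by (intro Bochner_Integration.integral_cong) (use x in \<open>auto split: split_indicator\<close>)
    ultimately have 1: "((\<lambda>s. \<integral>u. G s u * indicator {0..x} u \<partial>M_add) \<longlongrightarrow> a x) \<omega>" by simp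
    have im: "(indicator {1..exp x} :: real \<Rightarrow> real) \<in> borel_measurable M_mult"
      by (rule borel_M_mult) simp
    have ieq: "(\<lambda>u. indicator {1..exp x} (exp u) :: real) = indicator {0..x}"
      by (auto simp: fun_eq_iff split: split_indicator)
    have ii2: "integrable M_mult (indicator {1..exp x} :: real \<Rightarrow> real)"
      using CV(1)[OF im] ii ieq by simp
    have Bm: "mult_lim \<omega> f \<in> borel_measurable M_mult" using B unfolding wstar_lim_def Linf_def by auto
    have t2: "((\<lambda>s. \<integral>y. f (exp s * y) * indicator {1..exp x} y \<partial>M_mult) \<longlongrightarrow> (\<integral>y. mult_lim \<omega> f y * indicator {1..exp x} y \<partial>M_mult)) \<omega>"
      using B ii2 unfolding wstar_lim_def filterlim_filtermap by auto
    have e2: "(\<integral>y. mult_lim \<omega> f y * indicator {1..exp x} y \<partial>M_mult) = b (exp x)"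
    proof -
      have m: "(\<lambda>y. mult_lim \<omega> f y * indicator {1..exp x} y) \<in> borel_measurable M_mult"
        using Bm im by auto
      show ?thesis
        unfolding int_M_mult(2)[OF m] b_def set_lebesgue_integral_def
        by (intro Bochner_Integration.integral_cong) (use x in \<open>auto split: split_indicator\<close>)
    qed
    have ev: "eventually (\<lambda>s. (\<integral>y. f (exp s * y) * indicator {1..exp x} y \<partial>M_mult) = (\<integral>u. G s u * indicator {0..x} u \<partial>M_add)) \<omega>"
      using om_pos
    proof eventually_elim
      case (elim s)
      have m: "(\<lambda>y. f (exp s * y) * indicator {1..exp x} y) \<in> borel_measurable M_mult"
        using meas_scale[OF fm, of "exp s"] elim im by auto
      have e: "exp (u + s) = exp s * exp u" for u by (simp add: exp_add)
      have i: "(indicator {1..exp x} (exp u) :: real) = indicator {0..x} u" for u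
        using ieq by metis
      show ?case using CV(2)[OF m] by (simp add: G_def W_def e i)
    qed
    have 2: "((\<lambda>s. \<integral>u. G s u * indicator {0..x} u \<partial>M_add) \<longlongrightarrow> b (exp x)) \<omega>"
      using tendsto_cong[OF ev, of "b (exp x)"] t2 e2 by simp
    show ?thesis using tendsto_unique[OF om_nbot 2 1] .
  qed
  have "psi U \<omega> f = Lim U (\<lambda>x. (1 / ln (exp x)) * b (exp x))"
    unfolding psi_def Lim_filtermap b_def ..
  also have "\<dots> = Lim U (\<lambda>x. (1 / x) * a x)"
    by (rule Lim_cong_ev) (use assms(5) key in \<open>auto elim!: eventually_mono\<close>)
  also have "\<dots> = phi U \<omega> (W f)"
    unfolding phi_def a_def ..
  finally show ?thesis unfolding \<omega>_def by simp
qed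


end
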